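(* Let $k\ge 2$, let $H_0$ be a finite $k$-uniform hypergraph and let $(H_t)_{t\ge0}$ be the ILTH hypergraphs generated from $H_0$. If $H_0$ contains a motif of type $i\in\{13,14,15,24,25\}$ that contains $m$ vertices, then motifs of type $i$ occur at least $(m+1)^t$ times in $H_t$, for every $t\ge0$.
   Context: A $k$-uniform hypergraph has every hyperedge a $k$-element subset of the vertex set. The ILTH process: given $H_t$, form $H_{t+1}$ by adding for each vertex $x\in V(H_t)$ a new vertex $x'$ (its clone), and taking $E(H_{t+1})=E(H_t)\cup\{(e\setminus\{x\})\cup\{x'\} : e\in E(H_t),\ x\in e\}$. A motif consists of three distinct hyperedges $e_1,e_2,e_3$; the vertices it contains are those of $e_1\cup e_2\cup e_3$. Its type is the binary string $i_1\dots i_7$ where $i_j=1$ iff the $j$-th of the regions $e_1\setminus(e_2\cup e_3)$, $e_2\setminus(e_1\cup e_3)$, $e_3\setminus(e_1\cup e_2)$, $(e_1\cap e_2)\setminus e_3$, $(e_2\cap e_3)\setminus e_1$, $(e_1\cap e_3)\setminus e_2$, $e_1\cap e_2\cap e_3$ is nonempty, up to relabelling of $e_1,e_2,e_3$. The types are: type 13 $=0001111$, type 14 $=1001111$, type 15 $=1011111$, type 24 $=1001110$, type 25 $=1011110$. *)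

theory Defs
  imports Main
begin

definition k_uniform_hypergraph :: "nat \<Rightarrow> 'v set \<Rightarrow> 'v set set \<Rightarrow> bool" where
  "k_uniform_hypergraph k V E \<longleftrightarrow> finite V \<and> (\<forall>e\<in>E. e \<subseteq> V \<and> card e = k)"

text \<open>The ILTH process: (V t, E t) is H_t; clone t x is the clone x' of
x \<in> V t, added at step t+1.  Clones are new vertices, pairwise distinct.\<close>
definition ilth_process ::
  "'v set \<Rightarrow> 'v set set \<Rightarrow> (nat \<Rightarrow> 'v set) \<Rightarrow> (nat \<Rightarrow> 'v set set) \<Rightarrow> (nat \<Rightarrow> 'v \<Rightarrow> 'v) \<Rightarrow> bool"
where
  "ilth_process V0 E0 V E clone \<longleftrightarrow>
     V 0 = V0 \<and> E 0 = E0 \<and>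
     (\<forall>t. inj_on (clone t) (V t) \<and> clone t ` V t \<inter> V t = {} \<and>
          V (Suc t) = V t \<union> clone t ` V t \<and>
          E (Suc t) = E t \<union> {insert (clone t x) (e - {x}) | e x. e \<in> E t \<and> x \<in> e})"

text \<open>The seven regions of (e1,e2,e3), in the order of the paper; entry j is
True iff the j-th region is nonempty.\<close>
definition region_string :: "'v set \<Rightarrow> 'v set \<Rightarrow> 'v set \<Rightarrow> bool list" where
  "region_string e1 e2 e3 =
     [e1 - (e2 \<union> e3) \<noteq> {}, e2 - (e1 \<union> e3) \<noteq> {}, e3 - (e1 \<union> e2) \<noteq> {},
      (e1 \<inter> e2) - e3 \<noteq> {}, (e2 \<inter> e3) - e1 \<noteq> {}, (e1 \<inter> e3) - e2 \<noteq> {},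
      e1 \<inter> e2 \<inter> e3 \<noteq> {}]"

definition motif_has_type :: "'v set set \<Rightarrow> bool list \<Rightarrow> bool" where
  "motif_has_type M s \<longleftrightarrow>
     (\<exists>e1 e2 e3. M = {e1, e2, e3} \<and> e1 \<noteq> e2 \<and> e2 \<noteq> e3 \<and> e1 \<noteq> e3 \<and>
                 region_string e1 e2 e3 = s)"

definition type_string :: "nat \<Rightarrow> bool list" where
  "type_string i =
     (if i = 13 then [False, False, False, True, True, True, True]
      else if i = 14 then [True, False, False, True, True, True, True]
      else if i = 15 then [True, False, True, True, True, True, True]
      else if i = 24 then [True, False, False, True, True, True, False]
      else if i = 25 then [True, False, True, True, True, True, False]
      else [])"

definition motifs_of_type :: "'v set set \<Rightarrow> nat \<Rightarrow> 'v set set set" where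
  "motifs_of_type E i = {M. M \<subseteq> E \<and> card M = 3 \<and> motif_has_type M (type_string i)}"

end

theory Submission
  imports Defs
begin


lemma l1: assumes "inj_on f U" "X \<subseteq> U" "Y \<subseteq> U" "Z \<subseteq> U"
  shows "(f ` X - (f ` Y \<union> f ` Z) \<noteq> {}) = (X - (Y \<union> Z) \<noteq> {})"
proof -
  have "f ` (X - (Y \<union> Z)) = f ` X - f ` (Y \<union> Z)"
    by (rule inj_on_image_set_diff[OF assms(1)]) (use assms in auto)
  then show ?thesis by (metis image_Un image_is_empty)
qed

lemma l2: assumes "inj_on f U" "X \<subseteq> U" "Y \<subseteq> U" "Z \<subseteq> U"
  shows "(f ` X \<inter> f ` Y - f ` Z \<noteq> {}) = (X \<inter> Y - Z \<noteq> {})"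
proof -
  have "f ` (X \<inter> Y) = f ` X \<inter> f ` Y"
    by (rule inj_on_image_Int[OF assms(1)]) (use assms in auto)
  moreover have "f ` (X \<inter> Y - Z) = f ` (X \<inter> Y) - f ` Z"
    by (rule inj_on_image_set_diff[OF assms(1)]) (use assms in auto)
  ultimately show ?thesis by (metis image_is_empty)
qed

lemma l3: assumes "inj_on f U" "X \<subseteq> U" "Y \<subseteq> U" "Z \<subseteq> U"
  shows "(f ` X \<inter> f ` Y \<inter> f ` Z \<noteq> {}) = (X \<inter> Y \<inter> Z \<noteq> {})"
proof -
  have "f ` (X \<inter> Y) = f ` X \<inter> f ` Y"
    by (rule inj_on_image_Int[OF assms(1)]) (use assms in auto)
  moreover have "f ` (X \<inter> Y \<inter> Z) = f ` (X \<inter> Y) \<inter> f ` Z"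
    by (rule inj_on_image_Int[OF assms(1)]) (use assms in auto)
  ultimately show ?thesis by (metis image_is_empty)
qed

lemma region_inj:
  assumes "inj_on f (A \<union> B \<union> C)"
  shows "region_string (f ` A) (f ` B) (f ` C) = region_string A B C"
proof -
  have s: "A \<subseteq> A \<union> B \<union> C" "B \<subseteq> A \<union> B \<union> C" "C \<subseteq> A \<union> B \<union> C" by auto
  show ?thesis unfolding region_string_def
    using l1[OF assms s(1) s(2) s(3)] l1[OF assms s(2) s(1) s(3)] l1[OF assms s(3) s(1) s(2)]
      l2[OF assms s(1) s(2) s(3)] l2[OF assms s(2) s(3) s(1)] l2[OF assms s(1) s(3) s(2)]
      l3[OF assms s(1) s(2) s(3)]
    by simp
qed

lemma motif_inj:
  assumes "inj_on f (\<Union>M)" "motif_has_type M s"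
  shows "motif_has_type ((`) f ` M) s"
proof -
  obtain e1 e2 e3 where M: "M = {e1, e2, e3}" "e1 \<noteq> e2" "e2 \<noteq> e3" "e1 \<noteq> e3"
     "region_string e1 e2 e3 = s"
    using assms(2) unfolding motif_has_type_def by blast
  have inj: "inj_on f (e1 \<union> e2 \<union> e3)" using assms(1) M(1) by (simp add: Un_assoc)
  have "inj_on ((`) f) M" using inj_on_image[OF assms(1)] .
  then have d: "f ` e1 \<noteq> f ` e2" "f ` e2 \<noteq> f ` e3" "f ` e1 \<noteq> f ` e3"
    using M by (auto simp: inj_on_def)
  have im: "(`) f ` M = {f ` e1, f ` e2, f ` e3}" using M(1) by simp
  have r: "region_string (f ` e1) (f ` e2) (f ` e3) = s" using region_inj[OF inj] M(5) by simp
  show ?thesis unfolding motif_has_type_def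
    by (rule exI[of _ "f ` e1"], rule exI[of _ "f ` e2"], rule exI[of _ "f ` e3"])
      (use im d r in simp)
qed

lemma step:
  fixes Vt :: "'v set" and Et :: "'v set set" and c :: "'v \<Rightarrow> 'v"
  assumes fin: "finite Vt" and EP: "Et \<subseteq> Pow Vt" and inj: "inj_on c Vt"
    and disj: "c ` Vt \<inter> Vt = {}"
    and Es: "Et \<union> {insert (c x) (e - {x}) | e x. e \<in> Et \<and> x \<in> e} \<subseteq> Es"
    and finS: "finite {M \<in> motifs_of_type Es i. card (\<Union>M) = m}"
  shows "(m+1) * card {M \<in> motifs_of_type Et i. card (\<Union>M) = m}
         \<le> card {M \<in> motifs_of_type Es i. card (\<Union>M) = m}"
proof -
  define S where "S = {M \<in> motifs_of_type Et i. card (\<Union>M) = m}"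
  define S' where "S' = {M \<in> motifs_of_type Es i. card (\<Union>M) = m}"
  define ren where "ren x = (\<lambda>v. if v = x then c x else v)" for x
  define g where "g p = (case snd p of None \<Rightarrow> fst p | Some x \<Rightarrow> (`) (ren x) ` fst p)"
    for p :: "'v set set \<times> 'v option"
  define D where "D = Sigma S (\<lambda>M. insert None (Some ` \<Union>M))"
  have SE: "M \<subseteq> Et" "\<Union>M \<subseteq> Vt" "finite (\<Union>M)" "card (\<Union>M) = m"
     "card M = 3" "motif_has_type M (type_string i)" if "M \<in> S" for M
  proof -
    show 1: "M \<subseteq> Et" "card M = 3" "motif_has_type M (type_string i)" "card (\<Union>M) = m"
      using that unfolding S_def motifs_of_type_def by auto
    show 2: "\<Union>M \<subseteq> Vt" using 1 EP by blast
    show "finite (\<Union>M)" using 2 fin finite_subset by blast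
  qed
  have finS0: "finite S"
  proof (rule finite_subset)
    show "S \<subseteq> Pow (Pow Vt)" using SE(1) EP by blast
    show "finite (Pow (Pow Vt))" using fin by simp
  qed
  have cardD: "card D = (m+1) * card S"
  proof -
    have "card D = (\<Sum>M\<in>S. card (insert None (Some ` \<Union>M)))"
      unfolding D_def using finS0 SE(3) by (subst card_SigmaI) auto
    also have "\<dots> = (\<Sum>M\<in>S. m + 1)"
    proof (rule sum.cong)
      fix M assume "M \<in> S"
      then show "card (insert None (Some ` \<Union>M)) = m + 1"
        using SE(3,4)[of M] by (simp add: card_image)
    qed simp
    finally show ?thesis by simp
  qed
  have cnot: "c x \<notin> Vt" if "x \<in> Vt" for x using disj that by blast
  have inj_ren: "inj_on (ren x) Vt" if "x \<in> Vt" for x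
    unfolding inj_on_def ren_def using cnot that inj by (auto simp: inj_on_def)
  have ren_edge: "ren x ` e = (if x \<in> e then insert (c x) (e - {x}) else e)" for x e
    unfolding ren_def by auto
  have ren_sub: "ren x ` A \<subseteq> insert (c x) A" for x A unfolding ren_def by auto
  have gin: "g p \<in> S'" if "p \<in> D" for p
  proof -
    obtain M a where p0: "p = (M, a)" by (cases p)
    have p: "p = (M, a)" "M \<in> S" "a \<in> insert None (Some ` \<Union>M)"
      using that p0 unfolding D_def by auto
    show ?thesis
    proof (cases a)
      case None
      then show ?thesis using p SE[OF p(2)] Es unfolding g_def S'_def motifs_of_type_def by auto
    next
      case (Some x)
      then have x: "x \<in> \<Union>M" using p by auto
      have ij: "inj_on (ren x) (\<Union>M)" using inj_ren SE(2)[OF p(2)] x inj_on_subset by blast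
      define N where "N = (`) (ren x) ` M"
      have "N \<subseteq> Es"
      proof
        fix e' assume "e' \<in> N"
        then obtain e where e: "e \<in> M" "e' = ren x ` e" unfolding N_def by auto
        have "e \<in> Et" using e SE(1)[OF p(2)] by auto
        show "e' \<in> Es"
        proof (cases "x \<in> e")
          case True
          then have "insert (c x) (e - {x}) \<in> Es" using Es \<open>e \<in> Et\<close> by blast
          then show ?thesis using e(2) ren_edge[of x e] True by simp
        next
          case False
          then show ?thesis using e(2) ren_edge[of x e] Es \<open>e \<in> Et\<close> by auto
        qed
      qed
      moreover have "card N = 3" unfolding N_def
        using card_image[OF inj_on_image[OF ij]] SE(5)[OF p(2)] by simp
      moreover have "motif_has_type N (type_string i)"
        unfolding N_def using motif_inj[OF ij SE(6)[OF p(2)]] .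
      moreover have "card (\<Union>N) = m"
      proof -
        have "\<Union>N = ren x ` \<Union>M" unfolding N_def by auto
        then show ?thesis using card_image[OF ij] SE(4)[OF p(2)] by simp
      qed
      ultimately show ?thesis unfolding S'_def motifs_of_type_def g_def p(1) Some N_def by simp
    qed
  qed
  have ginj: "inj_on g D"
  proof (rule inj_onI)
    fix p q assume pq: "p \<in> D" "q \<in> D" "g p = g q"
    obtain M a where p0: "p = (M, a)" by (cases p)
    have p: "p = (M, a)" "M \<in> S" "a \<in> insert None (Some ` \<Union>M)"
      using pq(1) p0 unfolding D_def by auto
    obtain M' b where q0: "q = (M', b)" by (cases q)
    have q: "q = (M', b)" "M' \<in> S" "b \<in> insert None (Some ` \<Union>M')"
      using pq(2) q0 unfolding D_def by auto
    have U: "\<Union>(g (N, Some y)) = ren y ` \<Union>N" for N y by (simp add: g_def image_Union)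
    have cin: "c y \<in> \<Union>(g (N, Some y))" if "y \<in> \<Union>N" for N y
      unfolding U using that by (intro image_eqI[of _ _ y]) (simp_all add: ren_def)
    show "p = q"
    proof (cases a)
      case None
      note aN = None
      show ?thesis
      proof (cases b)
        case None then show ?thesis using pq(3) p q aN unfolding g_def by simp
      next
        case (Some y)
        then have y: "y \<in> \<Union>M'" using q by auto
        have "g (M', Some y) = M" using pq(3) p(1) q(1) aN Some by (simp add: g_def)
        then have "c y \<in> \<Union>M" using cin[OF y] by simp
        moreover have "y \<in> Vt" using SE(2)[OF q(2)] y by blast
        ultimately show ?thesis using SE(2)[OF p(2)] cnot[of y] by blast
      qed
    next
      case (Some x)
      note aS = Some
      then have x: "x \<in> \<Union>M" using p by auto
      show ?thesis
      proof (cases b)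
        case None
        have "g (M, Some x) = M'" using pq(3) p(1) q(1) aS None by (simp add: g_def)
        then have "c x \<in> \<Union>M'" using cin[OF x] by simp
        moreover have "x \<in> Vt" using SE(2)[OF p(2)] x by blast
        ultimately show ?thesis using SE(2)[OF q(2)] cnot[of x] by blast
      next
        case (Some y)
        then have y: "y \<in> \<Union>M'" using q by auto
        have eq: "g (M, Some x) = g (M', Some y)" using pq(3) p q aS Some by simp
        have "c x \<in> ren y ` \<Union>M'" using cin[OF x] unfolding eq U .
        then have "c x \<in> insert (c y) (\<Union>M')" using ren_sub by blast
        moreover have xV: "x \<in> Vt" using SE(2)[OF p(2)] x by blast
        moreover have yV: "y \<in> Vt" using SE(2)[OF q(2)] y by blast
        ultimately have "c x = c y" using cnot[of x] SE(2)[OF q(2)] by blast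
        then have xy: "x = y" using inj xV yV unfolding inj_on_def by blast
        have "(`) (ren x) ` M = (`) (ren x) ` M'" using eq xy unfolding g_def by simp
        moreover have "inj_on ((`) (ren x)) (Pow Vt)"
          using inj_on_image_Pow[OF inj_ren] x SE(2)[OF p(2)] by blast
        moreover have "M \<subseteq> Pow Vt" "M' \<subseteq> Pow Vt" using SE(1)[OF p(2)] SE(1)[OF q(2)] EP by auto
        ultimately have "M = M'" using inj_on_image_eq_iff[of "(`) (ren x)" "Pow Vt" M M'] by blast
        then show ?thesis using p q aS Some xy by simp
      qed
    qed
  qed
  have "card D \<le> card S'"
    using card_inj_on_le[OF ginj] gin finS unfolding S'_def by blast
  then show ?thesis using cardD unfolding S_def S'_def by simp
qed


theorem theorem3p5:
  fixes k :: nat and V0 :: "'v set" and E0 :: "'v set set"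
    and V :: "nat \<Rightarrow> 'v set" and E :: "nat \<Rightarrow> 'v set set" and clone :: "nat \<Rightarrow> 'v \<Rightarrow> 'v"
    and i m :: nat
  assumes "k \<ge> 2"
    and "k_uniform_hypergraph k V0 E0"
    and "ilth_process V0 E0 V E clone"
    and "i \<in> {13, 14, 15, 24, 25}"
    and "M0 \<in> motifs_of_type E0 i"
    and "m = card (\<Union>M0)"
  shows "\<forall>t. card (motifs_of_type (E t) i) \<ge> (m + 1) ^ t"
proof -
  have P: "V 0 = V0" "E 0 = E0"
    "\<And>t. inj_on (clone t) (V t)" "\<And>t. clone t ` V t \<inter> V t = {}"
    "\<And>t. V (Suc t) = V t \<union> clone t ` V t"
    "\<And>t. E (Suc t) = E t \<union> {insert (clone t x) (e - {x}) | e x. e \<in> E t \<and> x \<in> e}"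
    using assms(3) unfolding ilth_process_def by auto
  have H0: "finite V0" "E0 \<subseteq> Pow V0"
    using assms(2) unfolding k_uniform_hypergraph_def by auto
  have inv: "finite (V t) \<and> E t \<subseteq> Pow (V t)" for t
  proof (induction t)
    case 0 then show ?case using H0 P(1,2) by simp
  next
    case (Suc t)
    have "finite (V (Suc t))" using Suc P(5)[of t] by simp
    moreover have "E (Suc t) \<subseteq> Pow (V (Suc t))"
    proof
      fix e' assume "e' \<in> E (Suc t)"
      then consider "e' \<in> E t" | e x where "e \<in> E t" "x \<in> e" "e' = insert (clone t x) (e - {x})"
        using P(6)[of t] by blast
      then show "e' \<in> Pow (V (Suc t))"
      proof cases
        case 1 then show ?thesis using Suc P(5)[of t] by blast
      next
        case 2
        then have "e \<subseteq> V t" "x \<in> V t" using Suc by blast+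
        then show ?thesis using 2 P(5)[of t] by blast
      qed
    qed
    ultimately show ?case by blast
  qed
  have finM: "finite (motifs_of_type (E t) i)" for t
  proof (rule finite_subset)
    show "motifs_of_type (E t) i \<subseteq> Pow (Pow (V t))"
      using inv[of t] unfolding motifs_of_type_def by blast
    show "finite (Pow (Pow (V t)))" using inv[of t] by simp
  qed
  define S where "S t = {M \<in> motifs_of_type (E t) i. card (\<Union>M) = m}" for t
  have finS: "finite (S t)" for t using finM[of t] unfolding S_def by simp
  have main: "(m + 1) ^ t \<le> card (S t)" for t
  proof (induction t)
    case 0
    have "M0 \<in> S 0" using assms(5,6) P(2) unfolding S_def by simp
    then have "card (S 0) > 0" using finS[of 0] card_gt_0_iff by blast
    then show ?case by simp
  next
    case (Suc t)
    have "(m+1) * card (S t) \<le> card (S (Suc t))"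
      unfolding S_def
      by (rule step[of "V t" "E t" "clone t"])
        (use inv[of t] P(3,4,6) finS[of "Suc t"] in \<open>auto simp: S_def\<close>)
    then show ?case using Suc.IH
      by (metis (no_types, lifting) mult_le_mono2 order_trans power_Suc)
  qed
  show ?thesis
  proof
    fix t
    have "card (S t) \<le> card (motifs_of_type (E t) i)"
      by (rule card_mono[OF finM]) (auto simp: S_def)
    then show "(m + 1) ^ t \<le> card (motifs_of_type (E t) i)" using main[of t] by simp
  qed
qed

end
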